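(* Let $F=\{f_i\}_{i=1}^N$ be a tight frame for an $n$-dimensional Hilbert space $\mathcal{H}_n$ and let $p>1$. If $S_F^{-1}F\in\zeta_{\mathfrak{R}}^{(1),p}(F)$, then $S_F^{-1}F\in\zeta_{\mathcal{N}}^{(1),p}(F)$.
   Context: $F$ is tight if $\sum_i|\langle f,f_i\rangle|^2=A\|f\|^2$ for all $f$ and some $A>0$; $S_F$ is the frame operator and $S_F^{-1}F=\{S_F^{-1}f_i\}$ the canonical dual. $G=\{g_i\}$ is a dual of $F$ if $f=\sum_i\langle f,f_i\rangle g_i$ for all $f$. For a dual $G$ let $E_if=\langle f,f_i\rangle g_i$. Define $\mathrm{AE}_{\mathfrak{R}}^{(1),p}(F,G)=\{\frac1N\sum_i\rho(E_i)^p\}^{1/p}=\{\frac1N\sum_i|\langle f_i,g_i\rangle|^p\}^{1/p}$ ($\rho$ = spectral radius) and $\mathrm{AE}_{\mathcal{N}}^{(1),p}(F,G)=\{\frac1N\sum_i\omega(E_i)^p\}^{1/p}$ where $\omega(T)=\sup_{\|f\|=1}|\langle Tf,f\rangle|$ is the numerical radius (so $\omega(E_i)=\frac{|\langle f_i,g_i\rangle|+\|f_i\|\|g_i\|}2$). $\zeta_{\mathfrak{R}}^{(1),p}(F)$ (resp. $\zeta_{\mathcal{N}}^{(1),p}(F)$) is the set of duals minimizing $\mathrm{AE}_{\mathfrak{R}}^{(1),p}(F,\cdot)$ (resp. $\mathrm{AE}_{\mathcal{N}}^{(1),p}(F,\cdot)$) over all duals of $F$. *)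

theory Defs
  imports "HOL-Analysis.Analysis"
begin

text \<open>The n-dimensional (complex) Hilbert space H_n is modelled as complex ^ 'n,
  with n = CARD('n), and the standard inner product (linear in the first argument).\<close>

definition hinner :: "complex ^ 'n \<Rightarrow> complex ^ 'n \<Rightarrow> complex" where
  "hinner x y = (\<Sum>k\<in>UNIV. x $ k * cnj (y $ k))"

definition hnorm :: "complex ^ 'n \<Rightarrow> real" where
  "hnorm x = sqrt (Re (hinner x x))"

text \<open>Finite sequences F = {f_i}, i = 0..N-1.\<close>

definition is_frame :: "(nat \<Rightarrow> complex ^ 'n) \<Rightarrow> nat \<Rightarrow> bool" where
  "is_frame f N \<longleftrightarrow> (\<exists>A B. 0 < A \<and> A \<le> B \<and>
     (\<forall>x. A * (hnorm x)\<^sup>2 \<le> (\<Sum>i<N. (cmod (hinner x (f i)))\<^sup>2) \<and>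
          (\<Sum>i<N. (cmod (hinner x (f i)))\<^sup>2) \<le> B * (hnorm x)\<^sup>2))"

definition is_tight_frame :: "(nat \<Rightarrow> complex ^ 'n) \<Rightarrow> nat \<Rightarrow> bool" where
  "is_tight_frame f N \<longleftrightarrow> (\<exists>A>0. \<forall>x. (\<Sum>i<N. (cmod (hinner x (f i)))\<^sup>2) = A * (hnorm x)\<^sup>2)"

definition frame_op :: "(nat \<Rightarrow> complex ^ 'n) \<Rightarrow> nat \<Rightarrow> complex ^ 'n \<Rightarrow> complex ^ 'n" where
  "frame_op f N x = (\<Sum>i<N. hinner x (f i) *s f i)"

definition canon_dual :: "(nat \<Rightarrow> complex ^ 'n) \<Rightarrow> nat \<Rightarrow> nat \<Rightarrow> complex ^ 'n" where
  "canon_dual f N i = inv (frame_op f N) (f i)"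

definition is_dual :: "(nat \<Rightarrow> complex ^ 'n) \<Rightarrow> (nat \<Rightarrow> complex ^ 'n) \<Rightarrow> nat \<Rightarrow> bool" where
  "is_dual f g N \<longleftrightarrow> (\<forall>x. x = (\<Sum>i<N. hinner x (f i) *s g i))"

definition E_op :: "(nat \<Rightarrow> complex ^ 'n) \<Rightarrow> (nat \<Rightarrow> complex ^ 'n) \<Rightarrow> nat \<Rightarrow> complex ^ 'n \<Rightarrow> complex ^ 'n" where
  "E_op f g i x = hinner x (f i) *s g i"

text \<open>Spectral radius (finite dimensions: spectrum = set of eigenvalues).\<close>
definition spec_rad :: "(complex ^ 'n \<Rightarrow> complex ^ 'n) \<Rightarrow> real" where
  "spec_rad T = Sup {cmod l | l. \<exists>x. x \<noteq> 0 \<and> T x = l *s x}"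

definition num_rad :: "(complex ^ 'n \<Rightarrow> complex ^ 'n) \<Rightarrow> real" where
  "num_rad T = Sup {cmod (hinner (T x) x) | x. hnorm x = 1}"

definition AE_R :: "real \<Rightarrow> (nat \<Rightarrow> complex ^ 'n) \<Rightarrow> (nat \<Rightarrow> complex ^ 'n) \<Rightarrow> nat \<Rightarrow> real" where
  "AE_R p f g N = ((1 / real N) * (\<Sum>i<N. spec_rad (E_op f g i) powr p)) powr (1 / p)"

definition AE_N :: "real \<Rightarrow> (nat \<Rightarrow> complex ^ 'n) \<Rightarrow> (nat \<Rightarrow> complex ^ 'n) \<Rightarrow> nat \<Rightarrow> real" where
  "AE_N p f g N = ((1 / real N) * (\<Sum>i<N. num_rad (E_op f g i) powr p)) powr (1 / p)"

definition zeta_R :: "real \<Rightarrow> (nat \<Rightarrow> complex ^ 'n) \<Rightarrow> nat \<Rightarrow> (nat \<Rightarrow> complex ^ 'n) set" where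
  "zeta_R p f N = {g. is_dual f g N \<and> (\<forall>h. is_dual f h N \<longrightarrow> AE_R p f g N \<le> AE_R p f h N)}"

definition zeta_N :: "real \<Rightarrow> (nat \<Rightarrow> complex ^ 'n) \<Rightarrow> nat \<Rightarrow> (nat \<Rightarrow> complex ^ 'n) set" where
  "zeta_N p f N = {g. is_dual f g N \<and> (\<forall>h. is_dual f h N \<longrightarrow> AE_N p f g N \<le> AE_N p f h N)}"

end

theory Submission
  imports Defs
begin

lemma hinner_add_left: "hinner (x + y) z = hinner x z + hinner y z"
  by (simp add: hinner_def distrib_right sum.distrib)
lemma hinner_add_right: "hinner z (x + y) = hinner z x + hinner z y"
  by (simp add: hinner_def distrib_left sum.distrib)
lemma hinner_scale_left: "hinner (c *s x) y = c * hinner x y"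
  by (simp add: hinner_def sum_distrib_left mult.assoc)
lemma hinner_scale_right: "hinner x (c *s y) = cnj c * hinner x y"
  by (simp add: hinner_def sum_distrib_left algebra_simps)
lemma hinner_sum_left: "finite I \<Longrightarrow> hinner (\<Sum>i\<in>I. u i) y = (\<Sum>i\<in>I. hinner (u i) y)"
  by (induction I rule: finite_induct) (auto simp: hinner_add_left, simp add: hinner_def)
lemma hinner_commute: "hinner y x = cnj (hinner x y)"
  by (simp add: hinner_def mult.commute)
lemma hinner_self_re: "Re (hinner x x) = (\<Sum>k\<in>UNIV. (cmod (x $ k))\<^sup>2)"
proof -
  have "hinner x x = (\<Sum>k\<in>UNIV. complex_of_real ((cmod (x $ k))\<^sup>2))"
    unfolding hinner_def by (rule sum.cong[OF refl], subst complex_norm_square, rule refl)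
  also have "\<dots> = complex_of_real (\<Sum>k\<in>UNIV. (cmod (x $ k))\<^sup>2)" by simp
  finally show ?thesis by simp
qed
lemma hinner_self: "hinner x x = complex_of_real ((hnorm x)\<^sup>2)"
proof -
  have "hinner x x = (\<Sum>k\<in>UNIV. complex_of_real ((cmod (x $ k))\<^sup>2))"
    unfolding hinner_def by (rule sum.cong[OF refl], subst complex_norm_square, rule refl)
  also have "\<dots> = complex_of_real (\<Sum>k\<in>UNIV. (cmod (x $ k))\<^sup>2)" by simp
  finally show ?thesis unfolding hnorm_def hinner_self_re
    by (simp add: sum_nonneg)
qed
lemma hnorm_L2: "hnorm x = L2_set (\<lambda>k. cmod (x $ k)) UNIV"
  unfolding hnorm_def hinner_self_re L2_set_def by simp
lemma hnorm_nonneg: "hnorm x \<ge> 0" unfolding hnorm_L2 by (rule L2_set_nonneg)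
lemma cauchy_schwarz: "cmod (hinner x y) \<le> hnorm x * hnorm y"
proof -
  have "cmod (hinner x y) \<le> (\<Sum>k\<in>UNIV. cmod (x $ k * cnj (y $ k)))"
    unfolding hinner_def by (rule norm_sum)
  also have "\<dots> = (\<Sum>k\<in>UNIV. \<bar>cmod (x $ k)\<bar> * \<bar>cmod (y $ k)\<bar>)"
    by (simp add: norm_mult)
  also have "\<dots> \<le> hnorm x * hnorm y" unfolding hnorm_L2 by (rule L2_set_mult_ineq)
  finally show ?thesis .
qed
lemma hnorm_zero: "hnorm x = 0 \<Longrightarrow> x = 0"
proof -
  assume "hnorm x = 0"
  then have "(\<Sum>k\<in>UNIV. (cmod (x $ k))\<^sup>2) = 0" unfolding hnorm_def hinner_self_re
    using sum_nonneg[of UNIV "\<lambda>k. (cmod (x $ k))\<^sup>2"] by simp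
  then have "\<forall>k\<in>UNIV. (cmod (x $ k))\<^sup>2 = 0" by (subst (asm) sum_nonneg_eq_0_iff) auto
  then show "x = 0" by (simp add: vec_eq_iff)
qed
lemma hnorm_axis: "hnorm (axis k (1::complex)) = 1"
proof -
  have "(\<Sum>j\<in>UNIV. (cmod (axis k (1::complex) $ j))\<^sup>2) = (\<Sum>j\<in>UNIV. if j = k then 1 else 0)"
    by (rule sum.cong) (auto simp: axis_def)
  then show ?thesis unfolding hnorm_def hinner_self_re by simp
qed

lemma hinner_minus_left: "hinner (- x) y = - hinner x y"
  by (simp add: hinner_def sum_negf)
lemma frame_op_add: "frame_op f N (x + y) = frame_op f N x + frame_op f N y"
  by (simp add: frame_op_def hinner_add_left vector_sadd_rdistrib sum.distrib)
lemma frame_op_scale: "frame_op f N (c *s x) = c *s frame_op f N x"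
  by (simp add: frame_op_def hinner_scale_left vector_smult_assoc scaleR_sum_right[symmetric]
      vec_eq_iff sum_distrib_left mult.assoc)
lemma frame_op_quad: "hinner (frame_op f N x) x = complex_of_real (\<Sum>i<N. (cmod (hinner x (f i)))\<^sup>2)"
proof -
  have "hinner (frame_op f N x) x = (\<Sum>i<N. hinner x (f i) * hinner (f i) x)"
    unfolding frame_op_def by (simp add: hinner_sum_left hinner_scale_left)
  also have "\<dots> = (\<Sum>i<N. complex_of_real ((cmod (hinner x (f i)))\<^sup>2))"
    by (rule sum.cong[OF refl], subst complex_norm_square, subst hinner_commute[of "f _"], rule refl)
  finally show ?thesis by simp
qed

lemma polarization:
  fixes T :: "complex ^ 'n \<Rightarrow> complex ^ 'n"
  assumes add: "\<And>x y. T (x + y) = T x + T y" and sc: "\<And>c x. T (c *s x) = c *s T x"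
    and q: "\<And>x. hinner (T x) x = 0"
  shows "T x = 0"
proof -
  have s: "hinner (T x) y + hinner (T y) x = 0" for x y
    using q[of "x + y"] q[of x] q[of y] by (simp add: add hinner_add_left hinner_add_right add.commute)
  have "hinner (T x) y = 0" for y
  proof -
    have a: "hinner (T x) y + hinner (T y) x = 0" by (rule s)
    have "hinner (T x) (\<i> *s y) + hinner (T (\<i> *s y)) x = 0" by (rule s)
    then have b: "- \<i> * hinner (T x) y + \<i> * hinner (T y) x = 0"
      by (simp add: sc hinner_scale_left hinner_scale_right)
    from a have e: "hinner (T y) x = - hinner (T x) y" by (simp add: add_eq_0_iff)
    from b have "(- 2 * \<i>) * hinner (T x) y = 0" unfolding e by (simp add: algebra_simps)
    then show ?thesis by simp
  qed
  then have "hinner (T x) (T x) = 0" .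
  then have "hnorm (T x) = 0" by (simp add: hnorm_def)
  then show ?thesis by (rule hnorm_zero)
qed

lemma tight_frame_op:
  assumes "\<And>x. (\<Sum>i<N. (cmod (hinner x (f i)))\<^sup>2) = A * (hnorm x)\<^sup>2"
  shows "frame_op f N x = complex_of_real A *s x"
proof -
  let ?T = "\<lambda>x. frame_op f N x - complex_of_real A *s x"
  have "?T x = 0"
  proof (rule polarization[where T="?T"])
    show "?T (x + y) = ?T x + ?T y" for x y by (simp add: frame_op_add vector_sadd_rdistrib vector_add_ldistrib)
    show "?T (c *s x) = c *s ?T x" for c x
      by (simp add: frame_op_scale vec_eq_iff algebra_simps)
    show "hinner (?T x) x = 0" for x
    proof -
      have "hinner (?T x) x = hinner (frame_op f N x) x - complex_of_real A * hinner x x"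
        using hinner_add_left[of "frame_op f N x" "(- complex_of_real A) *s x" x]
        by (simp add: hinner_scale_left hinner_minus_left)
      also have "\<dots> = 0" by (simp add: frame_op_quad assms hinner_self)
      finally show ?thesis .
    qed
  qed
  then show ?thesis by simp
qed

lemma E_scale: "E_op f g i (c *s x) = c *s E_op f g i x"
  by (simp add: E_op_def hinner_scale_left vector_smult_assoc)

lemma num_set_ne: "{cmod (hinner (T x) x) | x. hnorm x = 1} \<noteq> {}"
  using hnorm_axis by blast

lemma num_bdd: "bdd_above {cmod (hinner (E_op f g i x) x) | x. hnorm x = 1}"
proof (rule bdd_aboveI)
  fix r assume "r \<in> {cmod (hinner (E_op f g i x) x) | x. hnorm x = 1}"
  then obtain x where x: "hnorm x = 1" and r: "r = cmod (hinner (E_op f g i x) x)" by blast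
  have "r = cmod (hinner x (f i)) * cmod (hinner (g i) x)"
    by (simp add: r E_op_def hinner_scale_left norm_mult)
  also have "\<dots> \<le> (hnorm x * hnorm (f i)) * (hnorm (g i) * hnorm x)"
    by (intro mult_mono cauchy_schwarz) (auto intro!: mult_nonneg_nonneg hnorm_nonneg)
  finally show "r \<le> hnorm (f i) * hnorm (g i)" using x by simp
qed

lemma num_rad_nonneg: "0 \<le> num_rad (E_op f g i)"
proof -
  obtain r where "r \<in> {cmod (hinner (E_op f g i x) x) | x. hnorm x = 1}"
    using num_set_ne by blast
  moreover then have "0 \<le> r" by auto
  ultimately show ?thesis unfolding num_rad_def using cSup_upper[OF _ num_bdd[of f g i]]
    by (meson order_trans)
qed

lemma eig_le_num:
  assumes "x \<noteq> 0" "E_op f g i x = l *s x"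
  shows "cmod l \<le> num_rad (E_op f g i)"
proof -
  define h where "h = hnorm x"
  have hpos: "h > 0" using assms(1) hnorm_zero hnorm_nonneg unfolding h_def
    by (metis less_eq_real_def)
  define y where "y = complex_of_real (1 / h) *s x"
  have hy: "hinner y y = 1"
  proof -
    have "hinner y y = complex_of_real (1/h) * cnj (complex_of_real (1/h)) * hinner x x"
      by (simp add: y_def hinner_scale_left hinner_scale_right)
    also have "\<dots> = 1" using hpos by (simp add: hinner_self h_def power2_eq_square)
    finally show ?thesis .
  qed
  then have ny: "hnorm y = 1" by (simp add: hnorm_def)
  have "hinner (E_op f g i y) y = l"
    using hy by (simp add: y_def E_scale assms(2) hinner_scale_left hinner_scale_right
        vector_smult_assoc[symmetric] mult.commute)
  then have "cmod l \<in> {cmod (hinner (E_op f g i x) x) | x. hnorm x = 1}" using ny by force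
  then show ?thesis unfolding num_rad_def using num_bdd by (rule cSup_upper)
qed

lemma spec_ne: "{cmod l | l. \<exists>x. x \<noteq> 0 \<and> E_op f g i x = l *s x} \<noteq> {}"
proof (cases "g i = 0")
  case True
  have "axis k (1::complex) \<noteq> 0 \<and> E_op f g i (axis k 1) = 0 *s axis k 1" for k
    using True hnorm_axis[of k] by (auto simp: hnorm_def hinner_def E_op_def)
  then show ?thesis by blast
next
  case False
  have "E_op f g i (g i) = hinner (g i) (f i) *s g i" by (simp add: E_op_def)
  then show ?thesis using False by blast
qed

lemma spec_bdd: "bdd_above {cmod l | l. \<exists>x. x \<noteq> 0 \<and> E_op f g i x = l *s x}"
  using eig_le_num by (intro bdd_aboveI[where M="num_rad (E_op f g i)"]) blast

lemma spec_le_num: "spec_rad (E_op f g i) \<le> num_rad (E_op f g i)"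
  unfolding spec_rad_def using spec_ne eig_le_num by (intro cSup_least) blast+

lemma spec_rad_nonneg: "0 \<le> spec_rad (E_op f g i)"
proof -
  obtain r where "r \<in> {cmod l | l. \<exists>x. x \<noteq> 0 \<and> E_op f g i x = l *s x}"
    using spec_ne by blast
  moreover then have "0 \<le> r" by auto
  ultimately show ?thesis unfolding spec_rad_def using cSup_upper[OF _ spec_bdd[of f g i]]
    by (meson order_trans)
qed

lemma num_le_spec_can:
  assumes "\<And>i. g i = complex_of_real c *s f i" "c \<ge> 0"
  shows "num_rad (E_op f g i) \<le> spec_rad (E_op f g i)"
proof -
  have "num_rad (E_op f g i) \<le> c * (hnorm (f i))\<^sup>2"
    unfolding num_rad_def
  proof (rule cSup_least)
    show "{cmod (hinner (E_op f g i x) x) | x. hnorm x = 1} \<noteq> {}" by (rule num_set_ne)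
    fix r assume "r \<in> {cmod (hinner (E_op f g i x) x) | x. hnorm x = 1}"
    then obtain x where x: "hnorm x = 1" and r: "r = cmod (hinner (E_op f g i x) x)" by blast
    have "r = c * (cmod (hinner x (f i)) * cmod (hinner (f i) x))"
      using assms(2) by (simp add: r E_op_def assms(1) hinner_scale_left norm_mult)
    also have "\<dots> \<le> c * ((hnorm x * hnorm (f i)) * (hnorm (f i) * hnorm x))"
      by (intro mult_left_mono mult_mono cauchy_schwarz assms(2))
        (auto intro!: mult_nonneg_nonneg hnorm_nonneg)
    finally show "r \<le> c * (hnorm (f i))\<^sup>2" using x by (simp add: power2_eq_square)
  qed
  also have "c * (hnorm (f i))\<^sup>2 \<le> spec_rad (E_op f g i)"
  proof (cases "f i = 0")
    case True then show ?thesis using spec_rad_nonneg by (simp add: hnorm_def hinner_def)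
  next
    case False
    have "E_op f g i (f i) = complex_of_real (c * (hnorm (f i))\<^sup>2) *s f i"
      by (simp add: E_op_def assms(1) hinner_self vector_smult_assoc mult.commute)
    then have mem: "cmod (complex_of_real (c * (hnorm (f i))\<^sup>2))
       \<in> {cmod l | l. \<exists>x. x \<noteq> 0 \<and> E_op f g i x = l *s x}"
      using False by (intro CollectI exI[of _ "complex_of_real (c * (hnorm (f i))\<^sup>2)"] conjI refl exI[of _ "f i"])
    have eq: "cmod (complex_of_real (c * (hnorm (f i))\<^sup>2)) = c * (hnorm (f i))\<^sup>2"
      using assms(2) by (simp only: norm_of_real abs_of_nonneg[OF mult_nonneg_nonneg[OF assms(2) zero_le_power2]])
    have "cmod (complex_of_real (c * (hnorm (f i))\<^sup>2)) \<le> spec_rad (E_op f g i)"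
      unfolding spec_rad_def by (rule cSup_upper[OF mem spec_bdd])
    then show ?thesis unfolding eq .
  qed
  finally show ?thesis .
qed

lemma AE_mono:
  fixes a b :: "nat \<Rightarrow> real"
  assumes "\<And>i. 0 \<le> a i" "\<And>i. a i \<le> b i" "p > 0"
  shows "((1 / real N) * (\<Sum>i<N. a i powr p)) powr (1 / p)
       \<le> ((1 / real N) * (\<Sum>i<N. b i powr p)) powr (1 / p)"
proof -
  have "(\<Sum>i<N. a i powr p) \<le> (\<Sum>i<N. b i powr p)"
    by (intro sum_mono powr_mono2) (use assms in auto)
  then have "(1 / real N) * (\<Sum>i<N. a i powr p) \<le> (1 / real N) * (\<Sum>i<N. b i powr p)"
    by (intro mult_left_mono) auto
  moreover have "0 \<le> (1 / real N) * (\<Sum>i<N. a i powr p)"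
    by (intro mult_nonneg_nonneg sum_nonneg) auto
  ultimately show ?thesis
    by (intro powr_mono2) (use assms in auto)
qed

theorem proposition5p6:
  fixes f :: "nat \<Rightarrow> complex ^ 'n" and N :: nat and p :: real
  assumes "is_tight_frame f N"
    and "p > 1"
    and "canon_dual f N \<in> zeta_R p f N"
  shows "canon_dual f N \<in> zeta_N p f N"
proof -
  obtain A where A: "A > 0" "\<And>x. (\<Sum>i<N. (cmod (hinner x (f i)))\<^sup>2) = A * (hnorm x)\<^sup>2"
    using assms(1) unfolding is_tight_frame_def by blast
  have S: "frame_op f N x = complex_of_real A *s x" for x by (rule tight_frame_op[OF A(2)])
  have inj: "inj (frame_op f N)"
  proof (rule injI)
    fix x y assume "frame_op f N x = frame_op f N y"
    then have e: "complex_of_real A *s x = complex_of_real A *s y" by (simp add: S)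
    have nz: "complex_of_real A \<noteq> 0" using A(1) by simp
    show "x = y" unfolding vec_eq_iff
    proof
      fix k
      have "complex_of_real A * x $ k = complex_of_real A * y $ k"
        using e by (metis vector_smult_component)
      then show "x $ k = y $ k" using nz by simp
    qed
  qed
  have can: "canon_dual f N i = complex_of_real (1/A) *s f i" for i
    unfolding canon_dual_def
    by (rule inv_f_eq[OF inj]) (use A(1) in \<open>simp add: S vector_smult_assoc\<close>)
  have dual: "is_dual f (canon_dual f N) N" and
    minR: "\<And>h. is_dual f h N \<Longrightarrow> AE_R p f (canon_dual f N) N \<le> AE_R p f h N"
    using assms(3) unfolding zeta_R_def by auto
  have c0: "0 \<le> 1 / A" using A(1) by simp
  have p0: "p > 0" using assms(2) by simp
  have "AE_N p f (canon_dual f N) N \<le> AE_N p f h N" if h: "is_dual f h N" for h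
  proof -
    have "AE_N p f (canon_dual f N) N \<le> AE_R p f (canon_dual f N) N"
      unfolding AE_N_def AE_R_def
      by (rule AE_mono[OF num_rad_nonneg num_le_spec_can[OF can c0] p0])
    also have "\<dots> \<le> AE_R p f h N" by (rule minR[OF h])
    also have "\<dots> \<le> AE_N p f h N"
      unfolding AE_N_def AE_R_def
      by (rule AE_mono[OF spec_rad_nonneg spec_le_num p0])
    finally show ?thesis .
  qed
  then show ?thesis using dual unfolding zeta_N_def by blast
qed

end
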